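(* Let $n\ge 2$, $b>0$, and let $p_0,\dots,p_{n-2}$ be complex-valued, $C^\infty$, $b$-periodic functions on $\mathbb{R}$; let $\mathcal{L}u := u^{(n)}+\sum_{k=0}^{n-2}p_k(x)u^{(k)}$. Fix $l\in\{0,1,\dots,2n-1\}$, let $S_l=\{\zeta\in\mathbb{C}: l\pi/n\le\arg\zeta\le(l+1)\pi/n\}$, fix $B\ge b$, and let $\omega_1,\dots,\omega_n$ be the $n$ distinct $n$-th roots of unity. Suppose that there are constants $Z,K>0$ such that for every $\zeta\in S_l$ with $|\zeta|>Z$, $y_1=y_1(x;\zeta),\dots,y_n=y_n(x;\zeta)$ are linearly independent solutions of $\mathcal{L}y=\zeta^n y$ satisfying $$\left|\frac{y_j^{(k-1)}(x;\zeta)}{\omega_j^{k-1}\zeta^{k-1}e^{\omega_j\zeta x}}-1\right|\le\frac{K}{|\zeta|},\qquad j,k=1,\dots,n,\ x\in[0,B].$$ Let $Y=[\gamma_{ij}]_{1\le i,j\le n}$ be the matrix of the shift $(\mathcal{T}f)(x)=f(x+b)$ with respect to the basis $y_1,\dots,y_n$, i.e. $y_j(x+b)=\sum_{i=1}^n\gamma_{ij}y_i(x)$. Then $$\gamma_{ij}=e^{\omega_j\zeta b}\left[\delta_{ij}+O(\zeta^{-1})\right]\qquad\text{as }\zeta\to\infty,\ \zeta\in S_l .$$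
   Context: Such solutions $y_j$ (called Naimark solutions) exist for $|\zeta|$ sufficiently large in each sector $S_l$. $\delta_{ij}$ is the Kronecker delta. *)

theory Defs
  imports "HOL-Analysis.Analysis"
begin

definition nth_vderiv :: "nat \<Rightarrow> (real \<Rightarrow> complex) \<Rightarrow> real \<Rightarrow> complex" where
  "nth_vderiv k f = ((\<lambda>g x. vector_derivative g (at x)) ^^ k) f"

definition smooth_fun :: "(real \<Rightarrow> complex) \<Rightarrow> bool" where
  "smooth_fun f \<longleftrightarrow>
     (\<forall>k x. (nth_vderiv k f has_vector_derivative nth_vderiv (Suc k) f x) (at x))"

definition periodic_fun :: "real \<Rightarrow> (real \<Rightarrow> complex) \<Rightarrow> bool" where
  "periodic_fun b f \<longleftrightarrow> (\<forall>x. f (x + b) = f x)"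

definition is_solution ::
  "nat \<Rightarrow> (nat \<Rightarrow> real \<Rightarrow> complex) \<Rightarrow> complex \<Rightarrow> (real \<Rightarrow> complex) \<Rightarrow> bool" where
  "is_solution n p \<zeta> f \<longleftrightarrow>
     (\<forall>k<n. \<forall>x. (nth_vderiv k f has_vector_derivative nth_vderiv (Suc k) f x) (at x)) \<and>
     (\<forall>x. nth_vderiv n f x + (\<Sum>k=0..n-2. p k x * nth_vderiv k f x) = \<zeta> ^ n * f x)"

definition sector :: "nat \<Rightarrow> nat \<Rightarrow> complex set" where
  "sector n l = {\<zeta>. \<exists>t. real l * pi / real n \<le> t \<and> t \<le> real (l + 1) * pi / real n \<and>
                        \<zeta> = complex_of_real (cmod \<zeta>) * exp (\<i> * complex_of_real t)}"

definition lin_indep_funs :: "nat \<Rightarrow> (nat \<Rightarrow> real \<Rightarrow> complex) \<Rightarrow> bool" where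
  "lin_indep_funs n y \<longleftrightarrow>
     (\<forall>c :: nat \<Rightarrow> complex. (\<forall>x. (\<Sum>j=1..n. c j * y j x) = 0) \<longrightarrow> (\<forall>j\<in>{1..n}. c j = 0))"

end

theory Submission
  imports Defs
begin


lemma vderiv_Suc: "nth_vderiv (Suc k) f x = vector_derivative (nth_vderiv k f) (at x)"
  by (simp add: nth_vderiv_def)

lemma vderiv_0: "nth_vderiv 0 f = f"
  by (simp add: nth_vderiv_def)

lemma vderiv_shift:
  assumes "\<forall>k<N. \<forall>x. (nth_vderiv k f has_vector_derivative nth_vderiv (Suc k) f x) (at x)"
    and "m \<le> N"
  shows "nth_vderiv m (\<lambda>x. f (x + b)) = (\<lambda>x. nth_vderiv m f (x + b))"
  using assms(2)
proof (induction m)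
  case 0
  then show ?case by (simp add: vderiv_0)
next
  case (Suc m)
  have IH: "nth_vderiv m (\<lambda>x. f (x + b)) = (\<lambda>x. nth_vderiv m f (x + b))"
    using Suc by simp
  show ?case
  proof
    fix x
    have d: "(nth_vderiv m f has_vector_derivative nth_vderiv (Suc m) f (x + b)) (at (x + b))"
      using assms(1) Suc.prems by auto
    have s: "((\<lambda>x::real. x + b) has_vector_derivative 1) (at x)"
      by (auto intro!: derivative_eq_intros simp: has_real_derivative_iff_has_vector_derivative[symmetric])
    have "((nth_vderiv m f \<circ> (\<lambda>x. x + b)) has_vector_derivative (1 *\<^sub>R nth_vderiv (Suc m) f (x + b))) (at x)"
      by (rule vector_diff_chain_at[OF s]) (use d in simp)
    hence "((\<lambda>x. nth_vderiv m f (x + b)) has_vector_derivative nth_vderiv (Suc m) f (x + b)) (at x)"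
      by (simp add: o_def)
    thus "nth_vderiv (Suc m) (\<lambda>x. f (x + b)) x = nth_vderiv (Suc m) f (x + b)"
      unfolding vderiv_Suc IH by (rule vector_derivative_at)
  qed
qed

lemma vderiv_sum:
  assumes "\<forall>i\<in>I. \<forall>k<N. \<forall>x. (nth_vderiv k (f i) has_vector_derivative nth_vderiv (Suc k) (f i) x) (at x)"
    and "m \<le> N"
  shows "nth_vderiv m (\<lambda>x. \<Sum>i\<in>I. c i * f i x) = (\<lambda>x. \<Sum>i\<in>I. c i * nth_vderiv m (f i) x)"
  using assms(2)
proof (induction m)
  case 0
  then show ?case by (simp add: vderiv_0)
next
  case (Suc m)
  have IH: "nth_vderiv m (\<lambda>x. \<Sum>i\<in>I. c i * f i x) = (\<lambda>x. \<Sum>i\<in>I. c i * nth_vderiv m (f i) x)"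
    using Suc by simp
  show ?case
  proof
    fix x
    have "((\<lambda>x. \<Sum>i\<in>I. c i * nth_vderiv m (f i) x) has_vector_derivative
           (\<Sum>i\<in>I. c i * nth_vderiv (Suc m) (f i) x)) (at x)"
      apply (rule has_vector_derivative_sum)
      apply (rule has_vector_derivative_mult_right)
      using assms(1) Suc.prems by auto
    thus "nth_vderiv (Suc m) (\<lambda>x. \<Sum>i\<in>I. c i * f i x) x = (\<Sum>i\<in>I. c i * nth_vderiv (Suc m) (f i) x)"
      unfolding vderiv_Suc IH by (rule vector_derivative_at)
  qed
qed


lemma root_norm1:
  fixes w :: complex assumes "w ^ n = 1" "n > 0" shows "cmod w = 1"
proof -
  have "cmod w ^ n = 1" using assms by (simp flip: norm_power)
  thus ?thesis using assms(2) power_eq_iff_eq_base[of n "cmod w" 1] by simp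
qed

lemma sum_shift1: fixes n :: nat shows "(\<Sum>k=1..n. f (k - 1)) = (\<Sum>k<n. f k :: 'a::comm_monoid_add)"
proof (induction n)
  case (Suc n)
  have "(\<Sum>k=1..Suc n. f (k - 1)) = (\<Sum>k=1..n. f (k - 1)) + f n"
    by (simp add: atLeastAtMostSuc_conv add.commute)
  thus ?case using Suc by simp
qed simp

lemma dft:
  fixes \<omega> :: "nat \<Rightarrow> complex"
  assumes roots: "\<forall>j\<in>{1..n}. \<omega> j ^ n = 1" and inj: "inj_on \<omega> {1..n}" and m: "m \<in> {1..n}"
  shows "(\<Sum>k=1..n. cnj (\<omega> m) ^ (k - 1) * (\<Sum>i=1..n. \<omega> i ^ (k - 1) * u i)) = of_nat n * u m"
proof -
  have n0: "n > 0" using m by auto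
  have "(\<Sum>k=1..n. cnj (\<omega> m) ^ (k - 1) * (\<Sum>i=1..n. \<omega> i ^ (k - 1) * u i))
      = (\<Sum>i=1..n. u i * (\<Sum>k=1..n. (cnj (\<omega> m) * \<omega> i) ^ (k - 1)))"
    unfolding sum_distrib_left sum_distrib_right
    apply (subst sum.swap)
    apply (intro sum.cong refl)
    apply (simp add: power_mult_distrib)
    done
  also have "\<dots> = (\<Sum>i=1..n. if i = m then u m * of_nat n else 0)"
  proof (rule sum.cong[OF refl])
    fix i assume i: "i \<in> {1..n}"
    have nm: "cmod (\<omega> m) = 1" using roots m n0 root_norm1 by blast
    have cm: "cnj (\<omega> m) * \<omega> m = 1"
    proof -
      have "complex_of_real ((cmod (\<omega> m))\<^sup>2) = \<omega> m * cnj (\<omega> m)" by (rule complex_norm_square)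
      thus ?thesis using nm by (simp add: mult.commute)
    qed
    have geo: "(\<Sum>k=1..n. (cnj (\<omega> m) * \<omega> i) ^ (k - 1)) = (\<Sum>k<n. (cnj (\<omega> m) * \<omega> i) ^ k)"
      by (rule sum_shift1)
    show "u i * (\<Sum>k=1..n. (cnj (\<omega> m) * \<omega> i) ^ (k - 1)) = (if i = m then u m * of_nat n else 0)"
    proof (cases "i = m")
      case True thus ?thesis using geo cm by simp
    next
      case False
      have ne: "\<omega> i \<noteq> \<omega> m" using inj i m False by (meson inj_onD)
      have r1: "cnj (\<omega> m) * \<omega> i \<noteq> 1"
      proof
        assume "cnj (\<omega> m) * \<omega> i = 1"
        hence "\<omega> m * (cnj (\<omega> m) * \<omega> i) = \<omega> m" by simp
        moreover have "\<omega> m * (cnj (\<omega> m) * \<omega> i) = (cnj (\<omega> m) * \<omega> m) * \<omega> i"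
          by (simp add: ac_simps)
        ultimately have "\<omega> i = \<omega> m" using cm by simp
        thus False using ne by simp
      qed
      have rn: "(cnj (\<omega> m) * \<omega> i) ^ n = 1"
      proof -
        have "(cnj (\<omega> m) * \<omega> i) ^ n = cnj (\<omega> m ^ n) * \<omega> i ^ n"
          by (simp add: power_mult_distrib complex_cnj_power)
        moreover have "\<omega> m ^ n = 1" "\<omega> i ^ n = 1" using roots i m by auto
        ultimately show ?thesis by simp
      qed
      show ?thesis using False geo r1 rn by (simp add: sum_gp_strict)
    qed
  qed
  also have "\<dots> = of_nat n * u m" using m by (simp add: sum.delta mult.commute)
  finally show ?thesis .
qed

lemma dft_bound:
  fixes \<omega> :: "nat \<Rightarrow> complex"
  assumes roots: "\<forall>j\<in>{1..n}. \<omega> j ^ n = 1" and inj: "inj_on \<omega> {1..n}" and m: "m \<in> {1..n}"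
  shows "real n * cmod (u m) \<le> (\<Sum>k=1..n. cmod (\<Sum>i=1..n. \<omega> i ^ (k - 1) * u i))"
proof -
  have n0: "n > 0" using m by auto
  have nm: "cmod (\<omega> m) = 1" using roots m n0 root_norm1 by blast
  have "real n * cmod (u m) = cmod (of_nat n * u m)" by (simp add: norm_mult)
  also have "\<dots> = cmod (\<Sum>k=1..n. cnj (\<omega> m) ^ (k - 1) * (\<Sum>i=1..n. \<omega> i ^ (k - 1) * u i))"
    using dft[OF roots inj m] by simp
  also have "\<dots> \<le> (\<Sum>k=1..n. cmod (cnj (\<omega> m) ^ (k - 1) * (\<Sum>i=1..n. \<omega> i ^ (k - 1) * u i)))"
    by (rule norm_sum)
  also have "\<dots> = (\<Sum>k=1..n. cmod (\<Sum>i=1..n. \<omega> i ^ (k - 1) * u i))"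
    by (simp add: norm_mult norm_power nm)
  finally show ?thesis .
qed

theorem theorem1:
  fixes n l :: nat and b B Z K :: real
    and p :: "nat \<Rightarrow> real \<Rightarrow> complex"
    and \<omega> :: "nat \<Rightarrow> complex"
    and y :: "nat \<Rightarrow> complex \<Rightarrow> real \<Rightarrow> complex"
    and \<gamma> :: "complex \<Rightarrow> nat \<Rightarrow> nat \<Rightarrow> complex"
  assumes n: "n \<ge> 2" and b: "b > 0"
    and p_smooth: "\<forall>k\<le>n-2. smooth_fun (p k)"
    and p_periodic: "\<forall>k\<le>n-2. periodic_fun b (p k)"
    and l: "l \<le> 2 * n - 1"
    and B: "B \<ge> b"
    and \<omega>_roots: "\<forall>j\<in>{1..n}. \<omega> j ^ n = 1"
    and \<omega>_distinct: "inj_on \<omega> {1..n}"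
    and ZK: "Z > 0" "K > 0"
    and sol: "\<forall>\<zeta>\<in>sector n l. cmod \<zeta> > Z \<longrightarrow> (\<forall>j\<in>{1..n}. is_solution n p \<zeta> (y j \<zeta>))"
    and indep: "\<forall>\<zeta>\<in>sector n l. cmod \<zeta> > Z \<longrightarrow> lin_indep_funs n (\<lambda>j. y j \<zeta>)"
    and asym: "\<forall>\<zeta>\<in>sector n l. cmod \<zeta> > Z \<longrightarrow>
       (\<forall>j\<in>{1..n}. \<forall>k\<in>{1..n}. \<forall>x\<in>{0..B}.
          cmod (nth_vderiv (k - 1) (y j \<zeta>) x /
                (\<omega> j ^ (k - 1) * \<zeta> ^ (k - 1) * exp (\<omega> j * \<zeta> * complex_of_real x)) - 1)
          \<le> K / cmod \<zeta>)"
    and shift: "\<forall>\<zeta>\<in>sector n l. cmod \<zeta> > Z \<longrightarrow>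
       (\<forall>j\<in>{1..n}. \<forall>x. y j \<zeta> (x + b) = (\<Sum>i=1..n. \<gamma> \<zeta> i j * y i \<zeta> x))"
  shows "\<exists>C R. \<forall>\<zeta>\<in>sector n l. cmod \<zeta> > R \<longrightarrow>
           (\<forall>i\<in>{1..n}. \<forall>j\<in>{1..n}.
              cmod (\<gamma> \<zeta> i j - exp (\<omega> j * \<zeta> * complex_of_real b) * (if i = j then 1 else 0))
              \<le> cmod (exp (\<omega> j * \<zeta> * complex_of_real b)) * (C / cmod \<zeta>))"
  proof -
  let ?C = "4 * real n * K" and ?R = "max Z (2 * real n * K)"
  have n0: "n > 0" using n by simp
  have wn: "\<And>i. i \<in> {1..n} \<Longrightarrow> cmod (\<omega> i) = 1" using \<omega>_roots n0 root_norm1 by blast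
  have wnz: "\<And>i. i \<in> {1..n} \<Longrightarrow> \<omega> i \<noteq> 0" using wn by fastforce
  have "\<forall>\<zeta>\<in>sector n l. cmod \<zeta> > ?R \<longrightarrow>
           (\<forall>i\<in>{1..n}. \<forall>j\<in>{1..n}.
              cmod (\<gamma> \<zeta> i j - exp (\<omega> j * \<zeta> * complex_of_real b) * (if i = j then 1 else 0))
              \<le> cmod (exp (\<omega> j * \<zeta> * complex_of_real b)) * (?C / cmod \<zeta>))"
  proof (intro ballI impI)
    fix \<zeta> i j assume zs: "\<zeta> \<in> sector n l" and zR: "cmod \<zeta> > ?R" and i: "i \<in> {1..n}" and j: "j \<in> {1..n}"
    have zZ: "cmod \<zeta> > Z" using zR by simp
    have z2: "cmod \<zeta> > 2 * real n * K" using zR by simp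
    have znz: "\<zeta> \<noteq> 0" using zZ ZK by auto
    define t where "t = K / cmod \<zeta>"
    have t0: "t \<ge> 0" using ZK by (simp add: t_def)
    have nt: "real n * t \<le> 1/2"
    proof -
      have "real n * K \<le> cmod \<zeta> / 2" using z2 by simp
      hence "real n * K / cmod \<zeta> \<le> 1/2" using znz by (simp add: divide_simps)
      thus ?thesis by (simp add: t_def)
    qed
    define E where "E = exp (\<omega> j * \<zeta> * complex_of_real b)"
    have Enz: "E \<noteq> 0" by (simp add: E_def)
    define A where "A k i' = nth_vderiv (k - 1) (y i' \<zeta>) 0 / (\<omega> i' ^ (k - 1) * \<zeta> ^ (k - 1))" for k i'
    define D where "D k = nth_vderiv (k - 1) (y j \<zeta>) b / (\<omega> j ^ (k - 1) * \<zeta> ^ (k - 1) * E)" for k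
    define c where "c i' = \<gamma> \<zeta> i' j / E - (if i' = j then 1 else 0)" for i'
    define S where "S = (\<Sum>i'=1..n. cmod (c i'))"
    have S0: "S \<ge> 0" by (simp add: S_def sum_nonneg)
    have Abnd: "cmod (A k i' - 1) \<le> t" if "k \<in> {1..n}" "i' \<in> {1..n}" for k i'
    proof -
      have "(0::real) \<in> {0..B}" using B b by simp
      thus ?thesis using asym zs zZ that unfolding A_def t_def by fastforce
    qed
    have Dbnd: "cmod (D k - 1) \<le> t" if "k \<in> {1..n}" for k
      using asym zs zZ that j B b unfolding D_def t_def E_def by auto
    have solj: "\<forall>i'\<in>{1..n}. \<forall>k<n. \<forall>x. (nth_vderiv k (y i' \<zeta>) has_vector_derivative nth_vderiv (Suc k) (y i' \<zeta>) x) (at x)"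
      using sol zs zZ by (auto simp: is_solution_def)
    have fun_eq: "(\<lambda>x. y j \<zeta> (x + b)) = (\<lambda>x. \<Sum>i'=1..n. \<gamma> \<zeta> i' j * y i' \<zeta> x)"
      using shift zs zZ j by auto
    have deriv_eq: "nth_vderiv (k - 1) (y j \<zeta>) b = (\<Sum>i'=1..n. \<gamma> \<zeta> i' j * nth_vderiv (k - 1) (y i' \<zeta>) 0)"
      if k: "k \<in> {1..n}" for k
    proof -
      have km: "k - 1 \<le> n" using k by auto
      have "nth_vderiv (k - 1) (\<lambda>x. y j \<zeta> (x + b)) = (\<lambda>x. nth_vderiv (k - 1) (y j \<zeta>) (x + b))"
        by (rule vderiv_shift[OF _ km]) (use solj j in blast)
      moreover have "nth_vderiv (k - 1) (\<lambda>x. \<Sum>i'=1..n. \<gamma> \<zeta> i' j * y i' \<zeta> x)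
          = (\<lambda>x. \<Sum>i'=1..n. \<gamma> \<zeta> i' j * nth_vderiv (k - 1) (y i' \<zeta>) x)"
        by (rule vderiv_sum[OF solj km])
      ultimately have "(\<lambda>x. nth_vderiv (k - 1) (y j \<zeta>) (x + b))
          = (\<lambda>x. \<Sum>i'=1..n. \<gamma> \<zeta> i' j * nth_vderiv (k - 1) (y i' \<zeta>) x)"
        using fun_eq by simp
      from fun_cong[OF this, of 0] show ?thesis by simp
    qed
    have keq: "(\<Sum>i'=1..n. \<omega> i' ^ (k - 1) * c i') =
        \<omega> j ^ (k - 1) * (D k - A k j) - (\<Sum>i'=1..n. c i' * \<omega> i' ^ (k - 1) * (A k i' - 1))"
      if k: "k \<in> {1..n}" for k
    proof -
      define q where "q = \<zeta> ^ (k - 1)"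
      have qnz: "q \<noteq> 0" using znz by (simp add: q_def)
      have nthi: "nth_vderiv (k - 1) (y i' \<zeta>) 0 = A k i' * \<omega> i' ^ (k - 1) * q" if "i' \<in> {1..n}" for i'
        using wnz[OF that] qnz unfolding A_def q_def by simp
      have nthj: "nth_vderiv (k - 1) (y j \<zeta>) b = D k * \<omega> j ^ (k - 1) * (q * E)"
        using wnz[OF j] qnz Enz unfolding D_def q_def by simp
      have gam: "\<gamma> \<zeta> i' j = (c i' + (if i' = j then 1 else 0)) * E" for i'
        using Enz unfolding c_def by simp
      have "D k * \<omega> j ^ (k - 1) * (q * E) = (\<Sum>i'=1..n. \<gamma> \<zeta> i' j * (A k i' * \<omega> i' ^ (k - 1) * q))"
        using deriv_eq[OF k] nthj nthi by simp
      also have "\<dots> = (\<Sum>i'=1..n. (c i' + (if i' = j then 1 else 0)) * A k i' * \<omega> i' ^ (k - 1)) * (q * E)"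
        unfolding sum_distrib_right by (intro sum.cong refl) (simp add: gam ac_simps)
      finally have h: "D k * \<omega> j ^ (k - 1) = (\<Sum>i'=1..n. (c i' + (if i' = j then 1 else 0)) * A k i' * \<omega> i' ^ (k - 1))"
        using qnz Enz by simp
      also have "\<dots> = (\<Sum>i'=1..n. c i' * A k i' * \<omega> i' ^ (k - 1)) + A k j * \<omega> j ^ (k - 1)"
      proof -
        have "(\<Sum>i'=1..n. (c i' + (if i' = j then 1 else 0)) * A k i' * \<omega> i' ^ (k - 1))
           = (\<Sum>i'=1..n. c i' * A k i' * \<omega> i' ^ (k - 1) + (if i' = j then A k j * \<omega> j ^ (k - 1) else 0))"
          by (intro sum.cong refl) (simp add: distrib_right)
        also have "\<dots> = (\<Sum>i'=1..n. c i' * A k i' * \<omega> i' ^ (k - 1)) + A k j * \<omega> j ^ (k - 1)"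
          using j by (simp add: sum.distrib)
        finally show ?thesis .
      qed
      finally have h2: "D k * \<omega> j ^ (k - 1) = (\<Sum>i'=1..n. c i' * A k i' * \<omega> i' ^ (k - 1)) + A k j * \<omega> j ^ (k - 1)" .
      have "(\<Sum>i'=1..n. c i' * \<omega> i' ^ (k - 1) * (A k i' - 1)) =
            (\<Sum>i'=1..n. c i' * A k i' * \<omega> i' ^ (k - 1)) - (\<Sum>i'=1..n. \<omega> i' ^ (k - 1) * c i')"
        unfolding sum_subtractf[symmetric] by (intro sum.cong refl) (simp add: algebra_simps)
      thus ?thesis using h2 by (simp add: algebra_simps)
    qed
    have vbnd: "cmod (\<Sum>i'=1..n. \<omega> i' ^ (k - 1) * c i') \<le> 2 * t + t * S" if k: "k \<in> {1..n}" for k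
    proof -
      have a: "cmod (\<omega> j ^ (k - 1) * (D k - A k j)) \<le> 2 * t"
      proof -
        have "cmod (D k - A k j) \<le> cmod (D k - 1) + cmod (A k j - 1)"
          using norm_triangle_ineq4[of "D k - 1" "A k j - 1"] by simp
        thus ?thesis using Dbnd[OF k] Abnd[OF k j] wn[OF j] by (simp add: norm_mult norm_power)
      qed
      have bb: "cmod (\<Sum>i'=1..n. c i' * \<omega> i' ^ (k - 1) * (A k i' - 1)) \<le> t * S"
      proof -
        have "cmod (\<Sum>i'=1..n. c i' * \<omega> i' ^ (k - 1) * (A k i' - 1))
            \<le> (\<Sum>i'=1..n. cmod (c i' * \<omega> i' ^ (k - 1) * (A k i' - 1)))" by (rule norm_sum)
        also have "\<dots> \<le> (\<Sum>i'=1..n. cmod (c i') * t)"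
        proof (rule sum_mono)
          fix i' assume i': "i' \<in> {1..n}"
          show "cmod (c i' * \<omega> i' ^ (k - 1) * (A k i' - 1)) \<le> cmod (c i') * t"
            using Abnd[OF k i'] wn[OF i'] by (simp add: norm_mult norm_power mult_left_mono)
        qed
        also have "\<dots> = t * S" by (simp add: S_def sum_distrib_left mult.commute)
        finally show ?thesis .
      qed
      show ?thesis using keq[OF k] a bb norm_triangle_ineq4[of "\<omega> j ^ (k - 1) * (D k - A k j)"
          "\<Sum>i'=1..n. c i' * \<omega> i' ^ (k - 1) * (A k i' - 1)"] by simp
    qed
    have cbnd: "cmod (c m) \<le> 2 * t + t * S" if m: "m \<in> {1..n}" for m
    proof -
      have "real n * cmod (c m) \<le> (\<Sum>k=1..n. cmod (\<Sum>i'=1..n. \<omega> i' ^ (k - 1) * c i'))"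
        by (rule dft_bound[OF \<omega>_roots \<omega>_distinct m])
      also have "\<dots> \<le> (\<Sum>k=1..n. 2 * t + t * S)" by (rule sum_mono) (rule vbnd)
      also have "\<dots> = real n * (2 * t + t * S)" by simp
      finally show ?thesis using n0 by simp
    qed
    have "(\<Sum>m=1..n. cmod (c m)) \<le> (\<Sum>m=1..n. 2 * t + t * S)" by (rule sum_mono) (rule cbnd)
    hence "S \<le> (\<Sum>m=1..n. 2 * t + t * S)" by (simp only: S_def)
    hence S1: "S \<le> 2 * (real n * t) + (real n * t) * S" by (simp add: algebra_simps)
    have "(real n * t) * S \<le> (1/2) * S" by (rule mult_right_mono[OF nt S0])
    hence S2: "S \<le> 4 * (real n * t)" using S1 by simp
    have "cmod (c i) \<le> S" unfolding S_def by (rule member_le_sum) (use i in auto)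
    hence ci: "cmod (c i) \<le> ?C / cmod \<zeta>" using S2 by (simp add: t_def)
    have "\<gamma> \<zeta> i j - E * (if i = j then 1 else 0) = E * c i" using Enz by (simp add: c_def algebra_simps)
    hence "cmod (\<gamma> \<zeta> i j - E * (if i = j then 1 else 0)) = cmod E * cmod (c i)" by (simp add: norm_mult)
    also have "\<dots> \<le> cmod E * (?C / cmod \<zeta>)" by (rule mult_left_mono[OF ci]) simp
    finally show "cmod (\<gamma> \<zeta> i j - exp (\<omega> j * \<zeta> * complex_of_real b) * (if i = j then 1 else 0))
              \<le> cmod (exp (\<omega> j * \<zeta> * complex_of_real b)) * (?C / cmod \<zeta>)" by (simp add: E_def)
  qed
  thus ?thesis by blast
qed

end
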